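(* Let $\mathcal{H}_O\simeq\mathbb{C}^{d_O}$ and $\mathcal{H}_R\simeq\mathbb{C}^{d_R}$. Let $H_R=\sum_{m=1}^{d_R}\lambda_m^{\uparrow}|\xi_m\rangle\langle\xi_m|$ with $\lambda_1^\uparrow\leqslant\dots\leqslant\lambda_{d_R}^\uparrow$ and $\{|\xi_m\rangle\}$ an orthonormal basis; let $\beta\in(0,\infty)$ and $\rho_R(\beta)=e^{-\beta H_R}/\mathrm{tr}[e^{-\beta H_R}]=\sum_m r_m^{\downarrow}|\xi_m\rangle\langle\xi_m|$. Let $\rho_O=\sum_{l=1}^{d_O}o_l^{\downarrow}|\varphi_l\rangle\langle\varphi_l|$ with $o_1^\downarrow\geqslant\dots\geqslant o_{d_O}^\downarrow$ and $\{|\varphi_l\rangle\}$ an orthonormal basis, and $\rho=\rho_O\otimes\rho_R(\beta)$. Let $p_{\varphi_1}^{\max}$ be the sum of the $d_R$ largest numbers among $\{o_l^\downarrow r_m^\downarrow\}_{l,m}$ (counted with multiplicity). Consider the following sequential swap algorithm, which applies a sequence of unitaries to $\rho$; throughout, the current state is diagonal in the basis $\{|\varphi_l\rangle\otimes|\xi_m\rangle\}$ and $p_{l,m}$ denotes its current diagonal entry at $|\varphi_l\rangle\otimes|\xi_m\rangle$ (initially $p_{l,m}=o_l^\downarrow r_m^\downarrow$). For $i=2,3,\dots,d_R$ (outer loop), for $m=d_R,d_R-1,\dots,1$ (middle loop), for $l=d_O,d_O-1,\dots,2$ (inner loop): if $p_{1,i}<p_{l,m}$, apply the unitary that swaps the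 basis vectors $|\varphi_1\rangle\otimes|\xi_i\rangle$ and $|\varphi_l\rangle\otimes|\xi_m\rangle$ and acts as the identity on all other basis vectors (this exchanges $p_{1,i}$ and $p_{l,m}$); otherwise do nothing. Let $\rho^{(j)}$ be the state after the $j$-th swap actually performed ($\rho^{(0)}=\rho$), $\rho_O^{(j)}=\mathrm{tr}_R[\rho^{(j)}]$, $\delta_j=p_{\varphi_1}^{\max}-\langle\varphi_1|\rho_O^{(j)}|\varphi_1\rangle$, and $\Delta Q_j=\mathrm{tr}[H_R(\mathrm{tr}_O[\rho^{(j)}]-\rho_R(\beta))]$. Then $(\delta_j)_j$ is non-increasing, $(\Delta Q_j)_j$ is non-decreasing, and for every $j$ the state $\rho_O^{(j)}$ is passive with respect to the ordered basis $(|\varphi_l\rangle)_l$, i.e. it is diagonal in this basis and $\langle\varphi_a|\rho_O^{(j)}|\varphi_a\rangle\geqslant\langle\varphi_b|\rho_O^{(j)}|\varphi_b\rangle$ whenever $a<b$.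
   Context: $\mathrm{tr}_O,\mathrm{tr}_R$ denote partial traces over $\mathcal{H}_O$ and $\mathcal{H}_R$. In the paper the basis $(|\varphi_l\rangle)_l$ is thought of as the eigenbasis of an object Hamiltonian in increasing order of energy, which is what makes this notion "passive". *)

theory Defs
  imports "Jordan_Normal_Form.Schur_Decomposition"
begin

(* Conventions: H_O = C^dO, H_R = C^dR, H_O \<otimes> H_R = C^(dO*dR) with the
   product index  a*dR + b  for  e_a \<otimes> e_b.  All indices are 0-based:
   paper index k corresponds to k-1 here. *)

definition ketbra :: "complex vec \<Rightarrow> complex vec \<Rightarrow> complex mat" where
  "ketbra v w = mat (dim_vec v) (dim_vec w) (\<lambda>(i,j). v $ i * cnj (w $ j))"

definition braket :: "complex vec \<Rightarrow> complex mat \<Rightarrow> complex vec \<Rightarrow> complex" where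
  "braket v M w = (M *\<^sub>v w) \<bullet>c v"

definition tensor_vec :: "nat \<Rightarrow> nat \<Rightarrow> complex vec \<Rightarrow> complex vec \<Rightarrow> complex vec" where
  "tensor_vec dO dR v w = vec (dO*dR) (\<lambda>k. v $ (k div dR) * w $ (k mod dR))"

definition tensor_mat :: "nat \<Rightarrow> nat \<Rightarrow> complex mat \<Rightarrow> complex mat \<Rightarrow> complex mat" where
  "tensor_mat dO dR A B = mat (dO*dR) (dO*dR)
     (\<lambda>(i,j). A $$ (i div dR, j div dR) * B $$ (i mod dR, j mod dR))"

definition mtrace :: "complex mat \<Rightarrow> complex" where
  "mtrace M = (\<Sum>i<dim_row M. M $$ (i, i))"

definition ptrace_R :: "nat \<Rightarrow> nat \<Rightarrow> complex mat \<Rightarrow> complex mat" where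
  "ptrace_R dO dR M = mat dO dO (\<lambda>(i,j). \<Sum>m<dR. M $$ (i*dR + m, j*dR + m))"

definition ptrace_O :: "nat \<Rightarrow> nat \<Rightarrow> complex mat \<Rightarrow> complex mat" where
  "ptrace_O dO dR M = mat dR dR (\<lambda>(i,j). \<Sum>l<dO. M $$ (l*dR + i, l*dR + j))"

definition orthonormal_basis :: "nat \<Rightarrow> (nat \<Rightarrow> complex vec) \<Rightarrow> bool" where
  "orthonormal_basis d e \<longleftrightarrow> (\<forall>k<d. e k \<in> carrier_vec d) \<and>
     (\<forall>a<d. \<forall>b<d. e a \<bullet>c e b = (if a = b then 1 else 0))"

definition spectral :: "nat \<Rightarrow> (nat \<Rightarrow> real) \<Rightarrow> (nat \<Rightarrow> complex vec) \<Rightarrow> complex mat" where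
  "spectral d c e = mat d d (\<lambda>(i,j). \<Sum>k<d. complex_of_real (c k) * (e k $ i * cnj (e k $ j)))"

(* Gibbs weights r_m = exp(-\<beta> \<lambda>_m) / \<Sum>_k exp(-\<beta> \<lambda>_k), the eigenvalues of e^{-\<beta>H_R}/tr e^{-\<beta>H_R} *)
definition gibbs_weights :: "nat \<Rightarrow> real \<Rightarrow> (nat \<Rightarrow> real) \<Rightarrow> nat \<Rightarrow> real" where
  "gibbs_weights dR \<beta> E m = exp (- \<beta> * E m) / (\<Sum>k<dR. exp (- \<beta> * E k))"

definition swap_unitary :: "nat \<Rightarrow> complex vec \<Rightarrow> complex vec \<Rightarrow> complex mat" where
  "swap_unitary n a b = 1\<^sub>m n - ketbra a a - ketbra b b + ketbra a b + ketbra b a"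

definition sum_largest :: "nat \<Rightarrow> real list \<Rightarrow> real" where
  "sum_largest d xs = sum_list (take d (rev (sort xs)))"

(* A step (i,m,l) compares the current diagonal entries
   p_{1,i} (at \<phi>_1\<otimes>\<xi>_i) and p_{l,m} (at \<phi>_l\<otimes>\<xi>_m) and swaps if p_{1,i} < p_{l,m}.
   swap_run returns the list [\<rho>^(0), \<rho>^(1), ...] of states after each swap actually performed. *)
definition swap_steps :: "nat \<Rightarrow> nat \<Rightarrow> (nat \<times> nat \<times> nat) list" where
  "swap_steps dO dR = [(i,m,l). i \<leftarrow> [1..<dR], m \<leftarrow> rev [0..<dR], l \<leftarrow> rev [1..<dO]]"

fun swap_run :: "nat \<Rightarrow> nat \<Rightarrow> (nat \<Rightarrow> complex vec) \<Rightarrow> (nat \<Rightarrow> complex vec)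
    \<Rightarrow> (nat \<times> nat \<times> nat) list \<Rightarrow> complex mat \<Rightarrow> complex mat list" where
  "swap_run dO dR \<phi> \<xi> [] \<rho> = [\<rho>]"
| "swap_run dO dR \<phi> \<xi> ((i,m,l) # ss) \<rho> =
     (let a = tensor_vec dO dR (\<phi> 0) (\<xi> i);
          b = tensor_vec dO dR (\<phi> l) (\<xi> m);
          U = swap_unitary (dO*dR) a b
      in if Re (braket a \<rho> a) < Re (braket b \<rho> b)
         then \<rho> # swap_run dO dR \<phi> \<xi> ss (U * \<rho> * mat_adjoint U)
         else swap_run dO dR \<phi> \<xi> ss \<rho>)"

definition passive_wrt :: "nat \<Rightarrow> (nat \<Rightarrow> complex vec) \<Rightarrow> complex mat \<Rightarrow> bool" where
  "passive_wrt d e M \<longleftrightarrow>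
     (\<forall>a<d. \<forall>b<d. a \<noteq> b \<longrightarrow> braket (e a) M (e b) = 0) \<and>
     (\<forall>a<d. \<forall>b<d. a < b \<longrightarrow> Re (braket (e b) M (e b)) \<le> Re (braket (e a) M (e a)))"

end

theory Submission
  imports Defs
begin


lemma sum_swap_mult:
  fixes f :: "nat \<Rightarrow> nat \<Rightarrow> 'a::comm_ring_1"
  shows "(\<Sum>s<d. (\<Sum>k<n. f k s) * y s) = (\<Sum>k<n. \<Sum>s<d. f k s * y s)"
  by (simp add: sum_distrib_right sum.swap[of _ "{..<n}" "{..<d}"])

lemma sum_split_mult:
  fixes f :: "nat \<Rightarrow> 'a::comm_monoid_add"
  shows "(\<Sum>k<a*b. f k) = (\<Sum>l<a. \<Sum>m<b. f (l*b+m))"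
proof -
  have "(\<Sum>k<a*b. f k) = (\<Sum>l<a. sum f {l*b..<l*b+b})"
    using sum.nat_group[of f b a, symmetric] by (simp add: mult.commute)
  also have "\<dots> = (\<Sum>l<a. \<Sum>m<b. f (l*b+m))"
  proof (rule sum.cong[OF refl])
    fix l
    have "sum f {l*b..<l*b+b} = sum f {0+l*b..<b+l*b}" by (simp add: add.commute)
    also have "\<dots> = (\<Sum>m=0..<b. f (m + l*b))" by (rule sum.shift_bounds_nat_ivl)
    finally show "sum f {l*b..<l*b+b} = (\<Sum>m<b. f (l*b+m))"
      by (simp add: atLeast0LessThan add.commute)
  qed
  finally show ?thesis .
qed

lemma mat_adjoint_index:
  assumes "i < dim_col A" "j < dim_row A"
  shows "mat_adjoint A $$ (i,j) = cnj (A $$ (j,i))"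
  using assms by (simp add: mat_adjoint_def mat_of_rows_def)

lemma mat_adjoint_dims[simp]:
  "dim_row (mat_adjoint A) = dim_col A" "dim_col (mat_adjoint A) = dim_row A"
  by (simp_all add: mat_adjoint_def mat_of_rows_def)

lemma spectral_carrier[simp]: "spectral d c e \<in> carrier_mat d d"
  by (simp add: spectral_def)
lemma spectral_dims[simp]: "dim_row (spectral d c e) = d" "dim_col (spectral d c e) = d"
  by (simp_all add: spectral_def)

lemma spectral_index: "i < d \<Longrightarrow> j < d \<Longrightarrow>
   spectral d c e $$ (i,j) = (\<Sum>k<d. complex_of_real (c k) * (e k $ i * cnj (e k $ j)))"
  by (simp add: spectral_def)

lemma onb_carrier: "orthonormal_basis d e \<Longrightarrow> k < d \<Longrightarrow> dim_vec (e k) = d"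
  by (auto simp: orthonormal_basis_def)

lemma onb_inner: assumes "orthonormal_basis d e" "a < d" "b < d" shows
   "(\<Sum>s<d. e a $ s * cnj (e b $ s)) = (if a = b then 1 else 0)"
proof -
  have db: "dim_vec (e b) = d" using assms onb_carrier by blast
  have "e a \<bullet>c e b = (\<Sum>s<d. e a $ s * cnj (e b $ s))"
    unfolding scalar_prod_def using db by (simp add: atLeast0LessThan)
  moreover have "e a \<bullet>c e b = (if a = b then 1 else 0)"
    using assms unfolding orthonormal_basis_def by blast
  ultimately show ?thesis by simp
qed

lemma braket_expand: "dim_vec v = dim_row M \<Longrightarrow> dim_vec w = dim_col M \<Longrightarrow>
   braket v M w = (\<Sum>i<dim_row M. (\<Sum>s<dim_col M. M $$ (i,s) * w $ s) * cnj (v $ i))"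
  unfolding braket_def
  by (simp add: atLeast0LessThan scalar_prod_def)

lemma braket_spectral:
  assumes e: "orthonormal_basis d e" and a: "a < d" and b: "b < d"
  shows "braket (e a) (spectral d c e) (e b) = (if a = b then complex_of_real (c a) else 0)"
proof -
  have dims: "\<And>k. k < d \<Longrightarrow> dim_vec (e k) = d" using onb_carrier[OF e] .
  have "braket (e a) (spectral d c e) (e b) =
     (\<Sum>i<d. (\<Sum>s<d. (\<Sum>k<d. complex_of_real (c k) * (e k $ i * cnj (e k $ s))) * e b $ s) * cnj (e a $ i))"
    using dims a b by (simp add: braket_expand spectral_index)
  also have "\<dots> = (\<Sum>i<d. (\<Sum>k<d. complex_of_real (c k) * e k $ i * (\<Sum>s<d. e b $ s * cnj (e k $ s))) * cnj (e a $ i))"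
    by (simp add: sum_swap_mult sum_distrib_left mult.assoc mult.left_commute)
  also have "\<dots> = (\<Sum>i<d. complex_of_real (c b) * e b $ i * cnj (e a $ i))"
    using b by (simp add: onb_inner[OF e] if_distrib cong: if_cong)
  also have "\<dots> = complex_of_real (c b) * (\<Sum>i<d. e b $ i * cnj (e a $ i))"
    by (simp add: sum_distrib_left mult.assoc)
  also have "\<dots> = (if a = b then complex_of_real (c a) else 0)"
    using a b by (simp add: onb_inner[OF e])
  finally show ?thesis .
qed



lemma conj_entry:
  assumes M: "M \<in> carrier_mat d d" and e: "\<And>k. k < d \<Longrightarrow> dim_vec (e k) = d"
    and i: "i < d" and j: "j < d"
  shows "(M * spectral d c e * mat_adjoint M) $$ (i,j) =
    (\<Sum>k<d. complex_of_real (c k) * ((M *\<^sub>v e k) $ i * cnj ((M *\<^sub>v e k) $ j)))"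
proof -
  define F where "F k s t = complex_of_real (c k) * M $$ (i,s) * e k $ s * (cnj (e k $ t) * cnj (M $$ (j,t)))" for k s t
  have dM: "dim_row M = d" "dim_col M = d" using M by auto
  have "(M * spectral d c e * mat_adjoint M) $$ (i,j) =
     (\<Sum>t<d. (\<Sum>s<d. M $$ (i,s) * spectral d c e $$ (s,t)) * cnj (M $$ (j,t)))"
    using i j dM by (simp add: scalar_prod_def atLeast0LessThan mat_adjoint_index)
  also have "\<dots> = (\<Sum>t<d. \<Sum>s<d. \<Sum>k<d. F k s t)"
    by (simp add: spectral_index F_def sum_distrib_left sum_distrib_right mult.assoc mult.left_commute mult.commute)
  also have "\<dots> = (\<Sum>s<d. \<Sum>t<d. \<Sum>k<d. F k s t)"
    by (rule sum.swap)
  also have "\<dots> = (\<Sum>s<d. \<Sum>k<d. \<Sum>t<d. F k s t)"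
    by (rule sum.cong[OF refl], rule sum.swap)
  also have "\<dots> = (\<Sum>k<d. \<Sum>s<d. \<Sum>t<d. F k s t)"
    by (rule sum.swap)
  also have "\<dots> = (\<Sum>k<d. complex_of_real (c k) * ((M *\<^sub>v e k) $ i * cnj ((M *\<^sub>v e k) $ j)))"
  proof (rule sum.cong[OF refl])
    fix k assume k: "k \<in> {..<d}"
    have "(M *\<^sub>v e k) $ i = (\<Sum>s<d. M $$ (i,s) * e k $ s)"
      using i dM e k by (simp add: scalar_prod_def atLeast0LessThan)
    moreover have "(M *\<^sub>v e k) $ j = (\<Sum>t<d. M $$ (j,t) * e k $ t)"
      using j dM e k by (simp add: scalar_prod_def atLeast0LessThan)
    ultimately show "(\<Sum>s<d. \<Sum>t<d. F k s t) = complex_of_real (c k) * ((M *\<^sub>v e k) $ i * cnj ((M *\<^sub>v e k) $ j))"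
      by (simp add: F_def cnj_sum sum_product sum_distrib_left mult.assoc mult.left_commute mult.commute) (rule sum.swap)
  qed
  finally show ?thesis .
qed


lemma cscalar_expand: "dim_vec w = n \<Longrightarrow> u \<bullet>c w = (\<Sum>s<n. u $ s * cnj (w $ s))"
  by (simp add: scalar_prod_def atLeast0LessThan)

lemma swap_apply:
  assumes a: "dim_vec a = n" and b: "dim_vec b = n" and u: "dim_vec u = n" and i: "i < n"
  shows "(swap_unitary n a b *\<^sub>v u) $ i =
     u $ i - (u \<bullet>c a) * a $ i - (u \<bullet>c b) * b $ i + (u \<bullet>c b) * a $ i + (u \<bullet>c a) * b $ i"
proof -
  have "(swap_unitary n a b *\<^sub>v u) $ i = (\<Sum>s<n. swap_unitary n a b $$ (i,s) * u $ s)"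
    using i u by (simp add: swap_unitary_def ketbra_def a b scalar_prod_def atLeast0LessThan)
  also have "\<dots> = (\<Sum>s<n. (if i = s then u $ s else 0) - a $ i * (u $ s * cnj (a $ s)) - b $ i * (u $ s * cnj (b $ s))
        + a $ i * (u $ s * cnj (b $ s)) + b $ i * (u $ s * cnj (a $ s)))"
    by (rule sum.cong[OF refl]) (use i in \<open>auto simp: swap_unitary_def ketbra_def a b algebra_simps\<close>)
  also have "\<dots> = u $ i - (u \<bullet>c a) * a $ i - (u \<bullet>c b) * b $ i + (u \<bullet>c b) * a $ i + (u \<bullet>c a) * b $ i"
    using i by (simp add: sum.distrib sum_subtractf cscalar_expand[OF a] cscalar_expand[OF b]
         sum_distrib_left[symmetric])
  finally show ?thesis .
qed

definition tr :: "nat \<Rightarrow> nat \<Rightarrow> nat \<Rightarrow> nat" where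
  "tr a b k = (if k = a then b else if k = b then a else k)"

lemma tr_tr[simp]: "tr a b (tr a b k) = k" by (simp add: tr_def)
lemma tr_less: "a < d \<Longrightarrow> b < d \<Longrightarrow> k < d \<Longrightarrow> tr a b k < d" by (simp add: tr_def)

lemma onb_cscalar: "orthonormal_basis d e \<Longrightarrow> a < d \<Longrightarrow> b < d \<Longrightarrow> e a \<bullet>c e b = (if a = b then 1 else 0)"
  unfolding orthonormal_basis_def by blast

lemma swap_basis:
  assumes e: "orthonormal_basis d e" and a: "a < d" and b: "b < d" and ab: "a \<noteq> b"
    and k: "k < d" and i: "i < d"
  shows "(swap_unitary d (e a) (e b) *\<^sub>v e k) $ i = e (tr a b k) $ i"
  using swap_apply[OF onb_carrier[OF e a] onb_carrier[OF e b] onb_carrier[OF e k] i]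
  by (simp add: onb_cscalar[OF e] a b k ab tr_def)

lemma swap_spectral:
  assumes e: "orthonormal_basis d e" and a: "a < d" and b: "b < d" and ab: "a \<noteq> b"
  shows "swap_unitary d (e a) (e b) * spectral d c e * mat_adjoint (swap_unitary d (e a) (e b))
       = spectral d (c \<circ> tr a b) e"
proof (rule eq_matI)
  let ?U = "swap_unitary d (e a) (e b)"
  have U: "?U \<in> carrier_mat d d" by (simp add: swap_unitary_def ketbra_def onb_carrier[OF e a] onb_carrier[OF e b])
  fix i j assume i: "i < dim_row (spectral d (c \<circ> tr a b) e)" and j: "j < dim_col (spectral d (c \<circ> tr a b) e)"
  then have i: "i < d" and j: "j < d" by auto
  have "(?U * spectral d c e * mat_adjoint ?U) $$ (i,j) =
    (\<Sum>k<d. complex_of_real (c k) * (e (tr a b k) $ i * cnj (e (tr a b k) $ j)))"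
    using conj_entry[OF U onb_carrier[OF e] i j] swap_basis[OF e a b ab _ i] swap_basis[OF e a b ab _ j]
    by simp
  also have "\<dots> = (\<Sum>k<d. complex_of_real (c (tr a b k)) * (e k $ i * cnj (e k $ j)))"
    by (rule sum.reindex_bij_witness[of _ "tr a b" "tr a b"]) (auto simp: tr_less a b)
  also have "\<dots> = spectral d (c \<circ> tr a b) e $$ (i,j)"
    using i j by (simp add: spectral_index)
  finally show "(?U * spectral d c e * mat_adjoint ?U) $$ (i,j) = spectral d (c \<circ> tr a b) e $$ (i,j)" .
next
  show "dim_row (swap_unitary d (e a) (e b) * spectral d c e * mat_adjoint (swap_unitary d (e a) (e b))) = dim_row (spectral d (c \<circ> tr a b) e)"
    by (simp add: swap_unitary_def ketbra_def onb_carrier[OF e a] onb_carrier[OF e b])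
  show "dim_col (swap_unitary d (e a) (e b) * spectral d c e * mat_adjoint (swap_unitary d (e a) (e b))) = dim_col (spectral d (c \<circ> tr a b) e)"
    by (simp add: swap_unitary_def ketbra_def onb_carrier[OF e a] onb_carrier[OF e b])
qed



definition tb :: "nat \<Rightarrow> nat \<Rightarrow> (nat \<Rightarrow> complex vec) \<Rightarrow> (nat \<Rightarrow> complex vec) \<Rightarrow> nat \<Rightarrow> complex vec" where
  "tb dO dR \<phi> \<xi> k = tensor_vec dO dR (\<phi> (k div dR)) (\<xi> (k mod dR))"

lemma divmod_idx1: "m < (dR::nat) \<Longrightarrow> (l*dR+m) div dR = l" by simp
lemma divmod_idx2: "m < (dR::nat) \<Longrightarrow> (l*dR+m) mod dR = m" by simp

lemma idx_less: assumes "l < (dO::nat)" "m < dR" shows "l*dR+m < dO*dR"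
proof -
  have "l*dR + m < l*dR + dR" using assms(2) by (rule add_strict_left_mono)
  also have "\<dots> = Suc l * dR" by simp
  also have "\<dots> \<le> dO * dR" using assms(1) by (intro mult_right_mono) auto
  finally show ?thesis .
qed

lemma tb_dim[simp]: "dim_vec (tb dO dR \<phi> \<xi> k) = dO*dR"
  by (simp add: tb_def tensor_vec_def)

lemma tb_index: "m < dR \<Longrightarrow> l < dO \<Longrightarrow>
   tb dO dR \<phi> \<xi> k $ (l*dR+m) = \<phi> (k div dR) $ l * \<xi> (k mod dR) $ m"
  using idx_less[of l dO m dR] by (simp add: tb_def tensor_vec_def)

lemma tb_onb:
  assumes \<phi>: "orthonormal_basis dO \<phi>" and \<xi>: "orthonormal_basis dR \<xi>"
  shows "orthonormal_basis (dO*dR) (tb dO dR \<phi> \<xi>)"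
  unfolding orthonormal_basis_def
proof (intro conjI allI impI)
  fix k show "tb dO dR \<phi> \<xi> k \<in> carrier_vec (dO*dR)" by (rule carrier_vecI) simp
next
  fix a b assume a: "a < dO*dR" and b: "b < dO*dR"
  then have pos: "0 < dR" by (cases dR) auto
  have ad: "a div dR < dO" "a mod dR < dR" "b div dR < dO" "b mod dR < dR"
    using less_mult_imp_div_less[OF a] less_mult_imp_div_less[OF b]
      pos by auto
  have "tb dO dR \<phi> \<xi> a \<bullet>c tb dO dR \<phi> \<xi> b =
     (\<Sum>l<dO. \<Sum>m<dR. tb dO dR \<phi> \<xi> a $ (l*dR+m) * cnj (tb dO dR \<phi> \<xi> b $ (l*dR+m)))"
    by (simp add: cscalar_expand[OF tb_dim] sum_split_mult)
  also have "\<dots> = (\<Sum>l<dO. \<Sum>m<dR. (\<phi> (a div dR) $ l * cnj (\<phi> (b div dR) $ l)) *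
      (\<xi> (a mod dR) $ m * cnj (\<xi> (b mod dR) $ m)))"
    by (intro sum.cong refl) (simp add: tb_index; simp add: mult_ac)
  also have "\<dots> = (\<Sum>l<dO. \<phi> (a div dR) $ l * cnj (\<phi> (b div dR) $ l)) *
      (\<Sum>m<dR. \<xi> (a mod dR) $ m * cnj (\<xi> (b mod dR) $ m))"
    by (simp add: sum_product)
  also have "\<dots> = (if a = b then 1 else 0)"
  proof -
    have iff: "a = b \<longleftrightarrow> a div dR = b div dR \<and> a mod dR = b mod dR" by (metis div_mult_mod_eq)
    show ?thesis using ad by (simp add: onb_inner[OF \<phi>] onb_inner[OF \<xi>] iff)
  qed
  finally show "tb dO dR \<phi> \<xi> a \<bullet>c tb dO dR \<phi> \<xi> b = (if a = b then 1 else 0)" .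
qed


lemma tb_index': "x < dO*dR \<Longrightarrow>
   tb dO dR \<phi> \<xi> k $ x = \<phi> (k div dR) $ (x div dR) * \<xi> (k mod dR) $ (x mod dR)"
  by (simp add: tb_def tensor_vec_def)

lemma sum3_swap:
  fixes F :: "nat \<Rightarrow> nat \<Rightarrow> nat \<Rightarrow> 'a::comm_monoid_add"
  shows "(\<Sum>x\<in>A. \<Sum>y\<in>B. \<Sum>z\<in>C. F x y z) = (\<Sum>y\<in>B. \<Sum>z\<in>C. \<Sum>x\<in>A. F x y z)"
proof -
  have "(\<Sum>x\<in>A. \<Sum>y\<in>B. \<Sum>z\<in>C. F x y z) = (\<Sum>y\<in>B. \<Sum>x\<in>A. \<Sum>z\<in>C. F x y z)"
    by (rule sum.swap)
  also have "\<dots> = (\<Sum>y\<in>B. \<Sum>z\<in>C. \<Sum>x\<in>A. F x y z)"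
    by (rule sum.cong[OF refl], rule sum.swap)
  finally show ?thesis .
qed

lemma initial_state:
  assumes dR: "0 < dR"
  shows "tensor_mat dO dR (spectral dO oc \<phi>) (spectral dR r \<xi>) =
     spectral (dO*dR) (\<lambda>k. oc (k div dR) * r (k mod dR)) (tb dO dR \<phi> \<xi>)"
proof (rule eq_matI)
  fix x y assume "x < dim_row (spectral (dO*dR) (\<lambda>k. oc (k div dR) * r (k mod dR)) (tb dO dR \<phi> \<xi>))"
    "y < dim_col (spectral (dO*dR) (\<lambda>k. oc (k div dR) * r (k mod dR)) (tb dO dR \<phi> \<xi>))"
  then have x: "x < dO*dR" and y: "y < dO*dR" by auto
  have xd: "x div dR < dO" "y div dR < dO" using less_mult_imp_div_less[OF x] less_mult_imp_div_less[OF y] by auto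
  have xm: "x mod dR < dR" "y mod dR < dR" using dR by auto
  have "spectral (dO*dR) (\<lambda>k. oc (k div dR) * r (k mod dR)) (tb dO dR \<phi> \<xi>) $$ (x,y) =
    (\<Sum>l<dO. \<Sum>m<dR. complex_of_real (oc l * r m) *
       (\<phi> l $ (x div dR) * \<xi> m $ (x mod dR) * cnj (\<phi> l $ (y div dR) * \<xi> m $ (y mod dR))))"
    using x y by (simp add: spectral_index sum_split_mult tb_index')
  also have "\<dots> = (\<Sum>l<dO. complex_of_real (oc l) * (\<phi> l $ (x div dR) * cnj (\<phi> l $ (y div dR)))) *
     (\<Sum>m<dR. complex_of_real (r m) * (\<xi> m $ (x mod dR) * cnj (\<xi> m $ (y mod dR))))"
    by (simp add: sum_product mult_ac)
  also have "\<dots> = tensor_mat dO dR (spectral dO oc \<phi>) (spectral dR r \<xi>) $$ (x,y)"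
    using x y xd xm by (simp add: tensor_mat_def spectral_index)
  finally show "tensor_mat dO dR (spectral dO oc \<phi>) (spectral dR r \<xi>) $$ (x,y) =
      spectral (dO*dR) (\<lambda>k. oc (k div dR) * r (k mod dR)) (tb dO dR \<phi> \<xi>) $$ (x,y)" by simp
qed (simp_all add: tensor_mat_def)

lemma ptrace_R_spectral:
  assumes \<xi>: "orthonormal_basis dR \<xi>"
  shows "ptrace_R dO dR (spectral (dO*dR) P (tb dO dR \<phi> \<xi>)) =
     spectral dO (\<lambda>l. \<Sum>m<dR. P (l*dR+m)) \<phi>"
proof (rule eq_matI)
  fix i j assume "i < dim_row (spectral dO (\<lambda>l. \<Sum>m<dR. P (l*dR+m)) \<phi>)"
    "j < dim_col (spectral dO (\<lambda>l. \<Sum>m<dR. P (l*dR+m)) \<phi>)"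
  then have i: "i < dO" and j: "j < dO" by auto
  define F where "F m l m' = complex_of_real (P (l*dR+m')) * (\<phi> l $ i * cnj (\<phi> l $ j)) *
      (\<xi> m' $ m * cnj (\<xi> m' $ m))" for m l m'
  have "ptrace_R dO dR (spectral (dO*dR) P (tb dO dR \<phi> \<xi>)) $$ (i,j) =
     (\<Sum>m<dR. spectral (dO*dR) P (tb dO dR \<phi> \<xi>) $$ (i*dR+m, j*dR+m))"
    using i j by (simp add: ptrace_R_def)
  also have "\<dots> = (\<Sum>m<dR. \<Sum>l<dO. \<Sum>m'<dR. F m l m')"
  proof (rule sum.cong[OF refl])
    fix m assume "m \<in> {..<dR}"
    then have m: "m < dR" by simp
    have "spectral (dO*dR) P (tb dO dR \<phi> \<xi>) $$ (i*dR+m, j*dR+m) =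
      (\<Sum>l<dO. \<Sum>m'<dR. complex_of_real (P (l*dR+m')) * (tb dO dR \<phi> \<xi> (l*dR+m') $ (i*dR+m) *
          cnj (tb dO dR \<phi> \<xi> (l*dR+m') $ (j*dR+m))))"
      using spectral_index[OF idx_less[OF i m] idx_less[OF j m]] by (simp add: sum_split_mult)
    also have "\<dots> = (\<Sum>l<dO. \<Sum>m'<dR. F m l m')"
      using i j m by (simp add: tb_index) (simp add: F_def mult_ac)
    finally show "spectral (dO*dR) P (tb dO dR \<phi> \<xi>) $$ (i*dR+m, j*dR+m) = (\<Sum>l<dO. \<Sum>m'<dR. F m l m')" .
  qed
  also have "\<dots> = (\<Sum>l<dO. \<Sum>m'<dR. \<Sum>m<dR. F m l m')" by (rule sum3_swap)
  also have "\<dots> = (\<Sum>l<dO. \<Sum>m'<dR. complex_of_real (P (l*dR+m')) * (\<phi> l $ i * cnj (\<phi> l $ j)))"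
    by (intro sum.cong refl) (simp add: F_def sum_distrib_left[symmetric] onb_inner[OF \<xi>])
  also have "\<dots> = spectral dO (\<lambda>l. \<Sum>m<dR. P (l*dR+m)) \<phi> $$ (i,j)"
    using i j by (simp add: spectral_index sum_distrib_right)
  finally show "ptrace_R dO dR (spectral (dO*dR) P (tb dO dR \<phi> \<xi>)) $$ (i,j) =
     spectral dO (\<lambda>l. \<Sum>m<dR. P (l*dR+m)) \<phi> $$ (i,j)" .
qed (simp_all add: ptrace_R_def)

lemma ptrace_O_spectral:
  assumes \<phi>: "orthonormal_basis dO \<phi>"
  shows "ptrace_O dO dR (spectral (dO*dR) P (tb dO dR \<phi> \<xi>)) =
     spectral dR (\<lambda>m. \<Sum>l<dO. P (l*dR+m)) \<xi>"
proof (rule eq_matI)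
  fix i j assume "i < dim_row (spectral dR (\<lambda>m. \<Sum>l<dO. P (l*dR+m)) \<xi>)"
    "j < dim_col (spectral dR (\<lambda>m. \<Sum>l<dO. P (l*dR+m)) \<xi>)"
  then have i: "i < dR" and j: "j < dR" by auto
  define F where "F l l' m = complex_of_real (P (l'*dR+m)) * (\<xi> m $ i * cnj (\<xi> m $ j)) *
      (\<phi> l' $ l * cnj (\<phi> l' $ l))" for l l' m
  have "ptrace_O dO dR (spectral (dO*dR) P (tb dO dR \<phi> \<xi>)) $$ (i,j) =
     (\<Sum>l<dO. spectral (dO*dR) P (tb dO dR \<phi> \<xi>) $$ (l*dR+i, l*dR+j))"
    using i j by (simp add: ptrace_O_def)
  also have "\<dots> = (\<Sum>l<dO. \<Sum>l'<dO. \<Sum>m<dR. F l l' m)"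
  proof (rule sum.cong[OF refl])
    fix l assume "l \<in> {..<dO}"
    then have l: "l < dO" by simp
    have "spectral (dO*dR) P (tb dO dR \<phi> \<xi>) $$ (l*dR+i, l*dR+j) =
      (\<Sum>l'<dO. \<Sum>m<dR. complex_of_real (P (l'*dR+m)) * (tb dO dR \<phi> \<xi> (l'*dR+m) $ (l*dR+i) *
          cnj (tb dO dR \<phi> \<xi> (l'*dR+m) $ (l*dR+j))))"
      using spectral_index[OF idx_less[OF l i] idx_less[OF l j]] by (simp add: sum_split_mult)
    also have "\<dots> = (\<Sum>l'<dO. \<Sum>m<dR. F l l' m)"
      using i j l by (simp add: tb_index) (simp add: F_def mult_ac)
    finally show "spectral (dO*dR) P (tb dO dR \<phi> \<xi>) $$ (l*dR+i, l*dR+j) = (\<Sum>l'<dO. \<Sum>m<dR. F l l' m)" .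
  qed
  also have "\<dots> = (\<Sum>m<dR. \<Sum>l'<dO. \<Sum>l<dO. F l l' m)"
    by (subst sum3_swap) (rule sum.swap)
  also have "\<dots> = (\<Sum>m<dR. \<Sum>l'<dO. complex_of_real (P (l'*dR+m)) * (\<xi> m $ i * cnj (\<xi> m $ j)))"
    by (intro sum.cong refl) (simp add: F_def sum_distrib_left[symmetric] onb_inner[OF \<phi>])
  also have "\<dots> = spectral dR (\<lambda>m. \<Sum>l<dO. P (l*dR+m)) \<xi> $$ (i,j)"
    using i j by (simp add: spectral_index sum_distrib_right)
  finally show "ptrace_O dO dR (spectral (dO*dR) P (tb dO dR \<phi> \<xi>)) $$ (i,j) =
     spectral dR (\<lambda>m. \<Sum>l<dO. P (l*dR+m)) \<xi> $$ (i,j)" .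
qed (simp_all add: ptrace_O_def)



lemma spectral_minus: "spectral d c e - spectral d g e = spectral d (\<lambda>k. c k - g k) e"
  by (rule eq_matI) (auto simp: spectral_index sum_subtractf[symmetric] algebra_simps)

lemma sum_delta_mult: assumes k: "k < (d::nat)" shows "(\<Sum>k'<d. f k' * (if k' = k then 1 else 0)) = (f k :: complex)"
proof -
  have "(\<Sum>k'<d. f k' * (if k' = k then 1 else 0)) = (\<Sum>k'<d. if k' = k then f k' else 0)"
    by (rule sum.cong) auto
  also have "\<dots> = f k" using k by simp
  finally show ?thesis .
qed

lemma spectral_mult:
  assumes e: "orthonormal_basis d e"
  shows "spectral d a e * spectral d b e = spectral d (\<lambda>k. a k * b k) e"
proof (rule eq_matI)
  fix i j assume "i < dim_row (spectral d (\<lambda>k. a k * b k) e)" "j < dim_col (spectral d (\<lambda>k. a k * b k) e)"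
  then have i: "i < d" and j: "j < d" by auto
  define F where "F s k k' = complex_of_real (a k) * complex_of_real (b k') * e k $ i * cnj (e k' $ j) *
     (e k' $ s * cnj (e k $ s))" for s k k'
  have "(spectral d a e * spectral d b e) $$ (i,j) = (\<Sum>s<d. spectral d a e $$ (i,s) * spectral d b e $$ (s,j))"
    using i j by (simp add: scalar_prod_def atLeast0LessThan)
  also have "\<dots> = (\<Sum>s<d. \<Sum>k<d. \<Sum>k'<d. F s k k')"
    by (rule sum.cong[OF refl]) (use i j in \<open>simp add: spectral_index sum_product F_def mult_ac\<close>)
  also have "\<dots> = (\<Sum>k<d. \<Sum>k'<d. \<Sum>s<d. F s k k')" by (rule sum3_swap)
  also have "\<dots> = (\<Sum>k<d. complex_of_real (a k * b k) * (e k $ i * cnj (e k $ j)))"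
  proof (rule sum.cong[OF refl])
    fix k assume "k \<in> {..<d}" then have k: "k < d" by simp
    have "(\<Sum>k'<d. \<Sum>s<d. F s k k') = (\<Sum>k'<d. complex_of_real (a k) * complex_of_real (b k') * e k $ i * cnj (e k' $ j) *
       (if k' = k then 1 else 0))"
      by (rule sum.cong[OF refl]) (use k in \<open>simp add: F_def sum_distrib_left[symmetric] onb_inner[OF e]\<close>)
    also have "\<dots> = complex_of_real (a k) * complex_of_real (b k) * e k $ i * cnj (e k $ j)"
      by (rule sum_delta_mult[OF k])
    also have "\<dots> = complex_of_real (a k * b k) * (e k $ i * cnj (e k $ j))"
      by (simp add: mult_ac)
    finally show "(\<Sum>k'<d. \<Sum>s<d. F s k k') = complex_of_real (a k * b k) * (e k $ i * cnj (e k $ j))" .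
  qed
  also have "\<dots> = spectral d (\<lambda>k. a k * b k) e $$ (i,j)" using i j by (simp add: spectral_index)
  finally show "(spectral d a e * spectral d b e) $$ (i,j) = spectral d (\<lambda>k. a k * b k) e $$ (i,j)" .
qed auto

lemma mtrace_spectral:
  assumes e: "orthonormal_basis d e"
  shows "mtrace (spectral d c e) = (\<Sum>k<d. complex_of_real (c k))"
proof -
  have "mtrace (spectral d c e) = (\<Sum>i<d. \<Sum>k<d. complex_of_real (c k) * (e k $ i * cnj (e k $ i)))"
    by (simp add: mtrace_def spectral_index)
  also have "\<dots> = (\<Sum>k<d. complex_of_real (c k) * (\<Sum>i<d. e k $ i * cnj (e k $ i)))"
    by (subst sum.swap) (simp add: sum_distrib_left)
  also have "\<dots> = (\<Sum>k<d. complex_of_real (c k))"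
    by (rule sum.cong[OF refl]) (simp add: onb_inner[OF e])
  finally show ?thesis .
qed

lemma trace_energy:
  assumes e: "orthonormal_basis d e"
  shows "Re (mtrace (spectral d E e * (spectral d c e - spectral d g e))) = (\<Sum>k<d. E k * (c k - g k))"
  by (simp add: spectral_minus spectral_mult[OF e] mtrace_spectral[OF e])

lemma braket_re_spectral:
  assumes e: "orthonormal_basis d e" and a: "a < d"
  shows "Re (braket (e a) (spectral d c e) (e a)) = c a"
  by (simp add: braket_spectral[OF e a a])



fun run :: "(nat \<times> nat \<times> nat) list \<Rightarrow> (nat \<Rightarrow> nat \<Rightarrow> real) \<Rightarrow> (nat \<Rightarrow> nat \<Rightarrow> real) list" where
  "run [] p = [p]"
| "run ((i,m,l) # ss) p = (if p 0 i < p l m then p # run ss (p(0 := (p 0)(i := p l m), l := (p l)(m := p 0 i))) else run ss p)"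

definition sw :: "nat \<Rightarrow> nat \<Rightarrow> nat \<Rightarrow> (nat \<Rightarrow> nat \<Rightarrow> real) \<Rightarrow> (nat \<Rightarrow> nat \<Rightarrow> real)" where
  "sw i m l p = p(0 := (p 0)(i := p l m), l := (p l)(m := p 0 i))"

lemma run_cons: "run ((i,m,l) # ss) p = (if p 0 i < p l m then p # run ss (sw i m l p) else run ss p)"
  by (simp add: sw_def)

declare run.simps(2)[simp del]

lemma run_hd: "run ss p \<noteq> [] \<and> hd (run ss p) = p"
  by (induction ss p rule: run.induct) (auto simp: run_cons)

lemma sw_0: "l \<noteq> 0 \<Longrightarrow> sw i m l p 0 = (p 0)(i := p l m)" by (simp add: sw_def)
lemma sw_l: "l \<noteq> 0 \<Longrightarrow> sw i m l p l = (p l)(m := p 0 i)" by (simp add: sw_def)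
lemma sw_other: "x \<noteq> 0 \<Longrightarrow> x \<noteq> l \<Longrightarrow> sw i m l p x = p x" by (simp add: sw_def)

lemma sum_upd:
  fixes f :: "nat \<Rightarrow> real"
  assumes "finite A" "x \<in> A"
  shows "sum (f(x := v)) A = sum f A - f x + v"
proof -
  have "sum (f(x := v)) A = (f(x:=v)) x + sum (f(x := v)) (A - {x})" using assms by (rule sum.remove)
  also have "sum (f(x := v)) (A - {x}) = sum f (A - {x})" by (rule sum.cong) auto
  also have "sum f (A - {x}) = sum f A - f x" using assms by (simp add: sum_diff1)
  finally show ?thesis by simp
qed

lemma sw_apply: "L \<noteq> 0 \<Longrightarrow> sw i m L p x y =
   (if x = 0 then (if y = i then p L m else p 0 y) else if x = L then (if y = m then p 0 i else p L y) else p x y)"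
  by (simp add: sw_def)

locale comb =
  fixes dO dR :: nat and w g :: "nat \<Rightarrow> real" and p0 :: "nat \<Rightarrow> nat \<Rightarrow> real"
  assumes w_mono: "\<And>m m'. m \<le> m' \<Longrightarrow> m' < dR \<Longrightarrow> w m \<le> w m'"
    and H0: "\<And>i m l. 1 \<le> l \<Longrightarrow> l < dO \<Longrightarrow> i \<le> m \<Longrightarrow> m < dR \<Longrightarrow> p0 l m \<le> p0 0 i"
begin

definition rowsum :: "(nat \<Rightarrow> nat \<Rightarrow> real) \<Rightarrow> nat \<Rightarrow> real" where
  "rowsum p l = (\<Sum>m<dR. p l m)"

definition f1 :: "(nat \<Rightarrow> nat \<Rightarrow> real) \<Rightarrow> real" where "f1 p = rowsum p 0"

definition W :: "(nat \<Rightarrow> nat \<Rightarrow> real) \<Rightarrow> real" where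
  "W p = (\<Sum>l<dO. \<Sum>m<dR. w m * p l m)"

definition f2 :: "(nat \<Rightarrow> nat \<Rightarrow> real) \<Rightarrow> real" where
  "f2 p = (\<Sum>m<dR. w m * ((\<Sum>l<dO. p l m) - g m))"

lemma f2_W: "f2 p = W p - (\<Sum>m<dR. w m * g m)"
  unfolding f2_def W_def
  by (simp add: right_diff_distrib sum_subtractf sum_distrib_left sum.swap[of _ "{..<dO}" "{..<dR}"])

definition Inv :: "(nat \<Rightarrow> nat \<Rightarrow> real) \<Rightarrow> bool" where
  "Inv p \<longleftrightarrow> (\<forall>m<dR. \<forall>l l'. 1 \<le> l \<longrightarrow> l \<le> l' \<longrightarrow> l' < dO \<longrightarrow> p l' m \<le> p l m) \<and>
     (1 < dO \<longrightarrow> rowsum p 1 \<le> rowsum p 0)"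

definition Good :: "(nat \<Rightarrow> nat \<Rightarrow> real) list \<Rightarrow> bool" where
  "Good R \<longleftrightarrow> sorted (map f1 R) \<and> sorted (map f2 R) \<and> (\<forall>x\<in>set R. Inv x)"

definition G :: "nat \<Rightarrow> (nat \<Rightarrow> nat \<Rightarrow> real) \<Rightarrow> bool" where
  "G i p \<longleftrightarrow> (\<forall>i'. i < i' \<longrightarrow> i' < dR \<longrightarrow> p 0 i' = p0 0 i') \<and>
     (\<forall>l' m'. 1 \<le> l' \<longrightarrow> l' < dO \<longrightarrow> i \<le> m' \<longrightarrow> m' < dR \<longrightarrow> p l' m' = p0 l' m')"

definition FF :: "nat \<Rightarrow> (nat \<Rightarrow> nat \<Rightarrow> real) \<Rightarrow> bool" where
  "FF K p \<longleftrightarrow> (\<forall>i'. K \<le> i' \<longrightarrow> i' < dR \<longrightarrow> p 0 i' = p0 0 i') \<and>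
     (\<forall>l' m'. 1 \<le> l' \<longrightarrow> l' < dO \<longrightarrow> K \<le> m' \<longrightarrow> m' < dR \<longrightarrow> p l' m' = p0 l' m')"

lemma Good_single: "Inv p \<Longrightarrow> Good [p]"
  by (simp add: Good_def)

lemma Good_cons:
  assumes "Good R" "R \<noteq> []" "f1 x \<le> f1 (hd R)" "f2 x \<le> f2 (hd R)" "Inv x"
  shows "Good (x # R)"
proof -
  obtain y R' where R: "R = y # R'" using assms(2) by (cases R) auto
  have "sorted (map f1 R)" "sorted (map f2 R)" "\<forall>x\<in>set R. Inv x" using assms(1) by (auto simp: Good_def)
  then show ?thesis using assms(3-5) unfolding Good_def R
    by (auto intro: order_trans)
qed



lemma wsum_upd:
  assumes "y0 < dR"
  shows "(\<Sum>y<dR. w y * (f(y0 := v)) y) = (\<Sum>y<dR. w y * f y) - w y0 * f y0 + w y0 * v"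
proof -
  have "(\<Sum>y<dR. w y * (f(y0 := v)) y) = (\<Sum>y<dR. ((\<lambda>y. w y * f y)(y0 := w y0 * v)) y)"
    by (rule sum.cong) auto
  also have "\<dots> = (\<Sum>y<dR. w y * f y) - w y0 * f y0 + w y0 * v"
    using assms by (subst sum_upd) auto
  finally show ?thesis .
qed

lemma step:
  assumes i: "1 \<le> i" "i < dR" and m: "m < dR" and L: "1 \<le> L" "L < dO"
    and inv: "Inv p" and g: "G i p" and g0: "i \<le> m \<longrightarrow> p 0 i = p0 0 i"
    and carry: "Suc L < dO \<longrightarrow> p (Suc L) m \<le> p 0 i"
    and swp: "p 0 i < p L m"
  shows "m < i" and "Inv (sw i m L p)" and "G i (sw i m L p)"
    and "sw i m L p L m \<le> sw i m L p 0 i"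
    and "f1 p \<le> f1 (sw i m L p)" and "f2 p \<le> f2 (sw i m L p)"
proof -
  show mi: "m < i"
  proof (rule ccontr)
    assume "\<not> m < i" then have im: "i \<le> m" by simp
    have "p L m = p0 L m" using g L m im unfolding G_def by blast
    also have "\<dots> \<le> p0 0 i" using H0[OF L im m] .
    also have "\<dots> = p 0 i" using g0 im by simp
    finally show False using swp by simp
  qed
  have L0: "L \<noteq> 0" using L by simp
  have col: "\<And>m' l l'. m' < dR \<Longrightarrow> 1 \<le> l \<Longrightarrow> l \<le> l' \<Longrightarrow> l' < dO \<Longrightarrow> p l' m' \<le> p l m'"
    using inv unfolding Inv_def by blast
  have below: "\<And>l'. L < l' \<Longrightarrow> l' < dO \<Longrightarrow> p l' m \<le> p 0 i"
  proof -
    fix l' assume "L < l'" "l' < dO"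
    then have "p l' m \<le> p (Suc L) m" using col[OF m, of "Suc L" l'] by simp
    also have "\<dots> \<le> p 0 i" using carry \<open>L < l'\<close> \<open>l' < dO\<close> by simp
    finally show "p l' m \<le> p 0 i" .
  qed
  have above: "\<And>l. 1 \<le> l \<Longrightarrow> l < L \<Longrightarrow> p 0 i \<le> p l m"
  proof -
    fix l assume "1 \<le> l" "l < L"
    then have "p L m \<le> p l m" using col[OF m _ _ L(2)] by simp
    then show "p 0 i \<le> p l m" using swp by simp
  qed
  have r0: "rowsum (sw i m L p) 0 = rowsum p 0 - p 0 i + p L m"
    unfolding rowsum_def sw_0[OF L0] using i by (subst sum_upd) auto
  have r1: "rowsum (sw i m L p) 1 \<le> rowsum p 1"
  proof (cases "L = 1")
    case True
    have "rowsum (sw i m L p) L = rowsum p L - p L m + p 0 i"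
      unfolding rowsum_def sw_l[OF L0] using m by (subst sum_upd) auto
    then have "rowsum (sw i m L p) 1 = rowsum p 1 - p 1 m + p 0 i" using True by simp
    then show ?thesis using swp True by simp
  next
    case False
    then show ?thesis unfolding rowsum_def using sw_other[of 1 L] by simp
  qed
  show "Inv (sw i m L p)"
    unfolding Inv_def
  proof (intro conjI allI impI)
    fix m' l l' assume m': "m' < dR" and l: "1 \<le> l" "l \<le> l'" "l' < dO"
    show "sw i m L p l' m' \<le> sw i m L p l m'"
      using l m' col[OF m' l] below above swp L0 mi
      by (auto simp: sw_apply)
  next
    assume "1 < dO"
    then have "rowsum p 1 \<le> rowsum p 0" using inv unfolding Inv_def by blast
    then show "rowsum (sw i m L p) 1 \<le> rowsum (sw i m L p) 0" using r0 r1 swp by simp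
  qed
  show "G i (sw i m L p)"
    using g mi L0 unfolding G_def by (auto simp: sw_apply)
  show "sw i m L p L m \<le> sw i m L p 0 i"
    using swp L0 by (simp add: sw_apply)
  show "f1 p \<le> f1 (sw i m L p)"
    unfolding f1_def using r0 swp by simp
  have h0: "(\<Sum>y<dR. w y * sw i m L p 0 y) = (\<Sum>y<dR. w y * p 0 y) - w i * p 0 i + w i * p L m"
    unfolding sw_0[OF L0] using wsum_upd[OF i(2)] .
  have hL: "(\<Sum>y<dR. w y * sw i m L p L y) = (\<Sum>y<dR. w y * p L y) - w m * p L m + w m * p 0 i"
    unfolding sw_l[OF L0] using wsum_upd[OF m] .
  define h where "h q x = (\<Sum>y<dR. w y * q x y)" for q :: "nat \<Rightarrow> nat \<Rightarrow> real" and x :: nat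
  have hq: "h (sw i m L p) = (h p)(0 := h p 0 - w i * p 0 i + w i * p L m, L := h p L - w m * p L m + w m * p 0 i)"
    using h0 hL L0 by (auto simp: h_def sw_other)
  have "W (sw i m L p) = sum (h (sw i m L p)) {..<dO}" by (simp add: W_def h_def)
  also have "\<dots> = W p + (w i - w m) * (p L m - p 0 i)"
  proof -
    let ?a = "h p 0 - w i * p 0 i + w i * p L m" and ?b = "h p L - w m * p L m + w m * p 0 i"
    have S1: "sum ((h p)(0 := ?a, L := ?b)) {..<dO} = sum ((h p)(0 := ?a)) {..<dO} - ((h p)(0 := ?a)) L + ?b"
      using L by (intro sum_upd) auto
    have S2: "sum ((h p)(0 := ?a)) {..<dO} = sum (h p) {..<dO} - h p 0 + ?a"
      using L by (intro sum_upd) auto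
    have S3: "((h p)(0 := ?a)) L = h p L" using L0 by simp
    have WW: "sum (h p) {..<dO} = W p" by (simp add: W_def h_def)
    show ?thesis unfolding hq S1 S2 S3 WW by (simp add: algebra_simps)
  qed
  finally have "W (sw i m L p) = W p + (w i - w m) * (p L m - p 0 i)" .
  moreover have "w m \<le> w i" using w_mono[of m i] mi i by simp
  ultimately show "f2 p \<le> f2 (sw i m L p)"
    using swp by (simp add: f2_W)
qed


lemma inner:
  assumes i: "1 \<le> i" "i < dR" and m: "m < dR"
  shows "L \<le> dO \<Longrightarrow> Inv p \<Longrightarrow> G i p \<Longrightarrow> (i \<le> m \<longrightarrow> p 0 i = p0 0 i) \<Longrightarrow>
    (L < dO \<longrightarrow> p L m \<le> p 0 i) \<Longrightarrow>
    (\<forall>q. Inv q \<and> G i q \<and> (i \<le> m \<longrightarrow> q 0 i = p0 0 i) \<longrightarrow> Good (run rest q)) \<Longrightarrow>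
    Good (run (map (\<lambda>l. (i,m,l)) (rev [1..<L]) @ rest) p)"
proof (induction L arbitrary: p)
  case 0
  then show ?case by simp
next
  case (Suc L)
  show ?case
  proof (cases "L = 0")
    case True
    then show ?thesis using Suc.prems by simp
  next
    case False
    then have L1: "1 \<le> L" by simp
    have Ld: "L < dO" using Suc.prems(1) by simp
    have lst: "map (\<lambda>l. (i,m,l)) (rev [1..<Suc L]) @ rest = (i,m,L) # (map (\<lambda>l. (i,m,l)) (rev [1..<L]) @ rest)"
      using L1 by simp
    show ?thesis
    proof (cases "p 0 i < p L m")
      case True
      have carry: "Suc L < dO \<longrightarrow> p (Suc L) m \<le> p 0 i" using Suc.prems(5) by simp
      note st = step[OF i m L1 Ld Suc.prems(2) Suc.prems(3) Suc.prems(4) carry True]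
      have IH: "Good (run (map (\<lambda>l. (i,m,l)) (rev [1..<L]) @ rest) (sw i m L p))"
        apply (rule Suc.IH)
        using Suc.prems(1,6) st by auto
      have eq: "run (map (\<lambda>l. (i,m,l)) (rev [1..<Suc L]) @ rest) p =
          p # run (map (\<lambda>l. (i,m,l)) (rev [1..<L]) @ rest) (sw i m L p)"
        unfolding lst run_cons using True by simp
      have hd: "run (map (\<lambda>l. (i,m,l)) (rev [1..<L]) @ rest) (sw i m L p) \<noteq> []"
          "hd (run (map (\<lambda>l. (i,m,l)) (rev [1..<L]) @ rest) (sw i m L p)) = sw i m L p"
        using run_hd by auto
      show ?thesis unfolding eq
        by (rule Good_cons[OF IH hd(1)]) (use hd(2) st Suc.prems(2) in auto)
    next
      case False
      have IH: "Good (run (map (\<lambda>l. (i,m,l)) (rev [1..<L]) @ rest) p)"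
        apply (rule Suc.IH)
        using Suc.prems False by auto
      show ?thesis unfolding lst run_cons using False IH by simp
    qed
  qed
qed

definition mid :: "nat \<Rightarrow> nat \<Rightarrow> (nat \<times> nat \<times> nat) list" where
  "mid i M = concat (map (\<lambda>m. map (\<lambda>l. (i,m,l)) (rev [1..<dO])) (rev [0..<M]))"

lemma midl:
  assumes i: "1 \<le> i" "i < dR"
  shows "M \<le> dR \<Longrightarrow> Inv p \<Longrightarrow> G i p \<Longrightarrow> (i < M \<longrightarrow> p 0 i = p0 0 i) \<Longrightarrow>
    (\<forall>q. Inv q \<and> G i q \<longrightarrow> Good (run rest q)) \<Longrightarrow>
    Good (run (mid i M @ rest) p)"
proof (induction M arbitrary: p)
  case 0
  then show ?case by (simp add: mid_def)
next
  case (Suc M)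
  have lst: "mid i (Suc M) @ rest = map (\<lambda>l. (i,M,l)) (rev [1..<dO]) @ (mid i M @ rest)"
    by (simp add: mid_def)
  show ?case unfolding lst
  proof (rule inner[OF i])
    show "M < dR" using Suc.prems by simp
    show "dO \<le> dO" "Inv p" "G i p" using Suc.prems by auto
    show "i \<le> M \<longrightarrow> p 0 i = p0 0 i" using Suc.prems by auto
    show "dO < dO \<longrightarrow> p dO M \<le> p 0 i" by simp
    show "\<forall>q. Inv q \<and> G i q \<and> (i \<le> M \<longrightarrow> q 0 i = p0 0 i) \<longrightarrow> Good (run (mid i M @ rest) q)"
      using Suc.IH Suc.prems(1,5) by auto
  qed
qed

lemma outer:
  "1 \<le> K \<Longrightarrow> Inv p \<Longrightarrow> FF K p \<Longrightarrow> Good (run (concat (map (\<lambda>i. mid i dR) [K..<dR])) p)"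
proof (induction "dR - K" arbitrary: K p)
  case 0
  then show ?case by (simp add: Good_single)
next
  case (Suc x)
  then have K: "K < dR" by simp
  have lst: "concat (map (\<lambda>i. mid i dR) [K..<dR]) = mid K dR @ concat (map (\<lambda>i. mid i dR) [Suc K..<dR])"
    using K by (simp add: upt_conv_Cons)
  show ?case unfolding lst
  proof (rule midl)
    show "1 \<le> K" "K < dR" "dR \<le> dR" "Inv p" using Suc.prems K by auto
    show "G K p" using Suc.prems(3) unfolding G_def FF_def by auto
    show "K < dR \<longrightarrow> p 0 K = p0 0 K" using Suc.prems(3) unfolding FF_def by auto
    show "\<forall>q. Inv q \<and> G K q \<longrightarrow> Good (run (concat (map (\<lambda>i. mid i dR) [Suc K..<dR])) q)"
    proof (intro allI impI)
      fix q assume q: "Inv q \<and> G K q"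
      have "FF (Suc K) q" using q unfolding G_def FF_def by auto
      then show "Good (run (concat (map (\<lambda>i. mid i dR) [Suc K..<dR])) q)"
        using Suc.hyps(1)[of "Suc K"] Suc.hyps(2) q by auto
    qed
  qed
qed

lemma steps_eq: "swap_steps dO dR = concat (map (\<lambda>i. mid i dR) [1..<dR])"
  by (simp add: swap_steps_def mid_def)

lemma main_comb: "Inv p0 \<Longrightarrow> Good (run (swap_steps dO dR) p0)"
  unfolding steps_eq by (rule outer) (auto simp: FF_def)

end



definition flat :: "nat \<Rightarrow> (nat \<Rightarrow> nat \<Rightarrow> real) \<Rightarrow> nat \<Rightarrow> real" where
  "flat dR p k = p (k div dR) (k mod dR)"

lemma divmod_eq_imp: "k div dR = a \<Longrightarrow> k mod dR = c \<Longrightarrow> k = a * dR + (c::nat)"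
  by (metis div_mult_mod_eq)

lemma flat_sw:
  assumes i: "i < dR" and m: "m < dR" and l: "l \<noteq> 0"
  shows "flat dR (sw i m l p) = flat dR p \<circ> tr i (l*dR+m)"
proof
  fix k
  have bi: "l*dR+m \<noteq> i"
  proof -
    have "dR \<le> l*dR" using l by simp
    then show ?thesis using i by linarith
  qed
  show "flat dR (sw i m l p) k = (flat dR p \<circ> tr i (l*dR+m)) k"
  proof (cases "k = i")
    case True
    then show ?thesis using i m l by (simp add: flat_def tr_def sw_apply)
  next
    case ki: False
    show ?thesis
    proof (cases "k = l*dR+m")
      case True
      then show ?thesis using i m l bi by (simp add: flat_def tr_def sw_apply)
    next
      case kb: False
      have c1: "\<not> (k div dR = 0 \<and> k mod dR = i)" using ki divmod_eq_imp by fastforce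
      have c2: "\<not> (k div dR = l \<and> k mod dR = m)" using kb divmod_eq_imp by fastforce
      show ?thesis using ki kb c1 c2 l by (auto simp: flat_def tr_def sw_apply)
    qed
  qed
qed

lemma swap_run_corr:
  assumes \<phi>: "orthonormal_basis dO \<phi>" and \<xi>: "orthonormal_basis dR \<xi>"
  shows "(\<forall>x\<in>set ss. case x of (i,m,l) \<Rightarrow> i < dR \<and> m < dR \<and> 1 \<le> l \<and> l < dO) \<Longrightarrow>
    swap_run dO dR \<phi> \<xi> ss (spectral (dO*dR) (flat dR p) (tb dO dR \<phi> \<xi>)) =
    map (\<lambda>q. spectral (dO*dR) (flat dR q) (tb dO dR \<phi> \<xi>)) (run ss p)"
proof (induction ss arbitrary: p)
  case Nil
  then show ?case by simp
next
  case (Cons x ss)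
  obtain i m l where x: "x = (i,m,l)" by (cases x) auto
  have i: "i < dR" and m: "m < dR" and l: "1 \<le> l" "l < dO" using Cons.prems x by auto
  have rest: "\<forall>x\<in>set ss. case x of (i,m,l) \<Rightarrow> i < dR \<and> m < dR \<and> 1 \<le> l \<and> l < dO"
    using Cons.prems by auto
  have dO: "0 < dO" using l by simp
  have ia: "i < dO*dR" using idx_less[OF dO i] by simp
  have ib: "l*dR+m < dO*dR" using idx_less[OF l(2) m] .
  have bi: "l*dR+m \<noteq> i"
  proof -
    have "dR \<le> l*dR" using l by simp
    then show ?thesis using i by linarith
  qed
  have ha: "tensor_vec dO dR (\<phi> 0) (\<xi> i) = tb dO dR \<phi> \<xi> i" using i by (simp add: tb_def)
  have hb: "tensor_vec dO dR (\<phi> l) (\<xi> m) = tb dO dR \<phi> \<xi> (l*dR+m)" using m by (simp add: tb_def)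
  note onb = tb_onb[OF \<phi> \<xi>]
  have ra: "Re (braket (tb dO dR \<phi> \<xi> i) (spectral (dO*dR) (flat dR p) (tb dO dR \<phi> \<xi>)) (tb dO dR \<phi> \<xi> i)) = p 0 i"
    using braket_re_spectral[OF onb ia] i by (simp add: flat_def)
  have rb: "Re (braket (tb dO dR \<phi> \<xi> (l*dR+m)) (spectral (dO*dR) (flat dR p) (tb dO dR \<phi> \<xi>)) (tb dO dR \<phi> \<xi> (l*dR+m))) = p l m"
    using braket_re_spectral[OF onb ib] m by (simp add: flat_def)
  have conj: "swap_unitary (dO*dR) (tb dO dR \<phi> \<xi> i) (tb dO dR \<phi> \<xi> (l*dR+m)) * spectral (dO*dR) (flat dR p) (tb dO dR \<phi> \<xi>) *
      mat_adjoint (swap_unitary (dO*dR) (tb dO dR \<phi> \<xi> i) (tb dO dR \<phi> \<xi> (l*dR+m))) =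
      spectral (dO*dR) (flat dR (sw i m l p)) (tb dO dR \<phi> \<xi>)"
    using swap_spectral[OF onb ia ib bi[symmetric]] flat_sw[OF i m, of l p] l by simp
  show ?case
    unfolding x swap_run.simps Let_def ha hb ra rb conj run_cons Cons.IH[OF rest]
    by simp
qed


lemma gibbs_pos: "0 < dR \<Longrightarrow> 0 < gibbs_weights dR \<beta> E m"
  unfolding gibbs_weights_def
  by (intro divide_pos_pos) (auto intro!: sum_pos)

lemma gibbs_mono:
  assumes "0 < dR" "\<beta> > 0" "E m \<le> E m'"
  shows "gibbs_weights dR \<beta> E m' \<le> gibbs_weights dR \<beta> E m"
  unfolding gibbs_weights_def
proof (rule divide_right_mono)
  show "exp (- \<beta> * E m') \<le> exp (- \<beta> * E m)" using assms by simp
  show "0 \<le> (\<Sum>k<dR. exp (- \<beta> * E k))" by (intro sum_nonneg) auto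
qed

theorem lemma4:
  fixes dO dR :: nat and \<phi> \<xi> :: "nat \<Rightarrow> complex vec" and oc E :: "nat \<Rightarrow> real" and \<beta> :: real
  assumes "dO \<ge> 1" and "dR \<ge> 1"
    and "orthonormal_basis dO \<phi>" and "orthonormal_basis dR \<xi>"
    and "\<And>m m'. m \<le> m' \<Longrightarrow> m' < dR \<Longrightarrow> E m \<le> E m'"
    and "\<beta> > 0"
    and "\<And>l l'. l \<le> l' \<Longrightarrow> l' < dO \<Longrightarrow> oc l' \<le> oc l"
    and "\<And>l. l < dO \<Longrightarrow> oc l \<ge> 0" and "(\<Sum>l<dO. oc l) = 1"
  defines "\<rho>s \<equiv> swap_run dO dR \<phi> \<xi> (swap_steps dO dR)
                 (tensor_mat dO dR (spectral dO oc \<phi>) (spectral dR (gibbs_weights dR \<beta> E) \<xi>))"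
    and "pmax \<equiv> sum_largest dR [oc l * gibbs_weights dR \<beta> E m. l \<leftarrow> [0..<dO], m \<leftarrow> [0..<dR]]"
  shows "(\<forall>j k. j \<le> k \<longrightarrow> k < length \<rho>s \<longrightarrow>
            pmax - Re (braket (\<phi> 0) (ptrace_R dO dR (\<rho>s ! k)) (\<phi> 0))
            \<le> pmax - Re (braket (\<phi> 0) (ptrace_R dO dR (\<rho>s ! j)) (\<phi> 0)))
       \<and> (\<forall>j k. j \<le> k \<longrightarrow> k < length \<rho>s \<longrightarrow>
            Re (mtrace (spectral dR E \<xi> * (ptrace_O dO dR (\<rho>s ! j) - (spectral dR (gibbs_weights dR \<beta> E) \<xi>))))
            \<le> Re (mtrace (spectral dR E \<xi> * (ptrace_O dO dR (\<rho>s ! k) - (spectral dR (gibbs_weights dR \<beta> E) \<xi>)))))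
       \<and> (\<forall>j < length \<rho>s. passive_wrt dO \<phi> (ptrace_R dO dR (\<rho>s ! j)))"
proof -
  note \<phi> = assms(3) and \<xi> = assms(4)
  define r where "r = gibbs_weights dR \<beta> E"
  define p0 where "p0 = (\<lambda>l m. oc l * r m)"
  have dR: "0 < dR" and dO: "0 < dO" using assms(1,2) by auto
  have rpos: "\<And>m. 0 \<le> r m" unfolding r_def using gibbs_pos[OF dR] less_imp_le by blast
  have rmono: "\<And>m m'. m \<le> m' \<Longrightarrow> m' < dR \<Longrightarrow> r m' \<le> r m"
    unfolding r_def using gibbs_mono[OF dR assms(6)] assms(5) by blast
  interpret c: comb dO dR E r p0
  proof
    show "\<And>m m'. m \<le> m' \<Longrightarrow> m' < dR \<Longrightarrow> E m \<le> E m'" by (rule assms(5))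
    fix i m l assume l: "1 \<le> l" "l < dO" and im: "i \<le> m" "m < dR"
    have "oc l * r m \<le> oc 0 * r m" using assms(7)[of 0 l] l rpos by (intro mult_right_mono) auto
    also have "\<dots> \<le> oc 0 * r i" using assms(8)[OF dO] rmono[OF im] by (intro mult_left_mono) auto
    finally show "p0 l m \<le> p0 0 i" by (simp add: p0_def)
  qed
  have inv0: "c.Inv p0"
    unfolding c.Inv_def
  proof (intro conjI allI impI)
    fix m l l' assume "m < dR" "1 \<le> l" "l \<le> l'" "l' < dO"
    then show "p0 l' m \<le> p0 l m" unfolding p0_def using assms(7) rpos by (intro mult_right_mono) auto
  next
    assume "1 < dO"
    then show "c.rowsum p0 1 \<le> c.rowsum p0 0" unfolding c.rowsum_def p0_def
      using assms(7)[of 0 1] rpos by (intro sum_mono mult_right_mono) auto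
  qed
  define R where "R = run (swap_steps dO dR) p0"
  have good: "c.Good R" unfolding R_def by (rule c.main_comb[OF inv0])
  define D where "D q = spectral (dO*dR) (flat dR q) (tb dO dR \<phi> \<xi>)" for q
  have init: "tensor_mat dO dR (spectral dO oc \<phi>) (spectral dR (gibbs_weights dR \<beta> E) \<xi>) =
      spectral (dO*dR) (flat dR p0) (tb dO dR \<phi> \<xi>)"
    unfolding initial_state[OF dR] flat_def p0_def r_def by simp
  have range: "\<forall>x\<in>set (swap_steps dO dR). case x of (i,m,l) \<Rightarrow> i < dR \<and> m < dR \<and> 1 \<le> l \<and> l < dO"
    by (auto simp: swap_steps_def)
  have rhos: "\<rho>s = map D R"
    unfolding \<rho>s_def init R_def D_def using swap_run_corr[OF \<phi> \<xi> range] by simp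
  have rowsum_eq: "\<And>q l. (\<Sum>m<dR. flat dR q (l*dR+m)) = c.rowsum q l"
    unfolding c.rowsum_def flat_def by (rule sum.cong) auto
  have ptR: "\<And>q. ptrace_R dO dR (D q) = spectral dO (c.rowsum q) \<phi>"
    unfolding D_def ptrace_R_spectral[OF \<xi>] rowsum_eq by simp
  have A: "\<And>q. Re (braket (\<phi> 0) (ptrace_R dO dR (D q)) (\<phi> 0)) = c.f1 q"
    unfolding ptR c.f1_def using braket_re_spectral[OF \<phi> dO] by simp
  have colsum_eq: "\<And>q m. m < dR \<Longrightarrow> (\<Sum>l<dO. flat dR q (l*dR+m)) = (\<Sum>l<dO. q l m)"
    unfolding flat_def by (rule sum.cong) auto
  have B: "\<And>q. Re (mtrace (spectral dR E \<xi> * (ptrace_O dO dR (D q) - spectral dR (gibbs_weights dR \<beta> E) \<xi>))) = c.f2 q"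
    unfolding D_def ptrace_O_spectral[OF \<phi>] trace_energy[OF \<xi>] c.f2_def r_def[symmetric]
    by (rule sum.cong) (auto simp: colsum_eq)
  have C: "\<And>q. c.Inv q \<Longrightarrow> passive_wrt dO \<phi> (ptrace_R dO dR (D q))"
  proof -
    fix q assume inv: "c.Inv q"
    have col: "\<And>m l l'. m < dR \<Longrightarrow> 1 \<le> l \<Longrightarrow> l \<le> l' \<Longrightarrow> l' < dO \<Longrightarrow> q l' m \<le> q l m"
      using inv unfolding c.Inv_def by blast
    have rs: "\<And>a b. a < b \<Longrightarrow> b < dO \<Longrightarrow> c.rowsum q b \<le> c.rowsum q a"
    proof -
      fix a b assume ab: "a < b" "b < dO"
      have mono1: "\<And>l. 1 \<le> l \<Longrightarrow> l \<le> b \<Longrightarrow> c.rowsum q b \<le> c.rowsum q l"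
        unfolding c.rowsum_def using col ab by (intro sum_mono) auto
      show "c.rowsum q b \<le> c.rowsum q a"
      proof (cases "a = 0")
        case True
        have "1 < dO" using ab by simp
        then have "c.rowsum q 1 \<le> c.rowsum q 0" using inv unfolding c.Inv_def by blast
        moreover have "c.rowsum q b \<le> c.rowsum q 1" using mono1[of 1] ab by simp
        ultimately show ?thesis using True by simp
      next
        case False
        then show ?thesis using mono1[of a] ab by simp
      qed
    qed
    show "passive_wrt dO \<phi> (ptrace_R dO dR (D q))"
      unfolding passive_wrt_def ptR using rs by (simp add: braket_spectral[OF \<phi>])
  qed
  have s1: "sorted (map c.f1 R)" and s2: "sorted (map c.f2 R)" and iv: "\<forall>x\<in>set R. c.Inv x"
    using good unfolding c.Good_def by auto
  have len: "length \<rho>s = length R" unfolding rhos by simp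
  have nth: "\<And>k. k < length \<rho>s \<Longrightarrow> \<rho>s ! k = D (R ! k)" unfolding rhos by simp
  show ?thesis
  proof (intro conjI allI impI)
    fix j k assume jk: "j \<le> k" "k < length \<rho>s"
    have "c.f1 (R ! j) \<le> c.f1 (R ! k)"
      using sorted_nth_mono[OF s1 jk(1)] jk len by simp
    then show "pmax - Re (braket (\<phi> 0) (ptrace_R dO dR (\<rho>s ! k)) (\<phi> 0))
            \<le> pmax - Re (braket (\<phi> 0) (ptrace_R dO dR (\<rho>s ! j)) (\<phi> 0))"
      using jk by (simp add: nth A)
  next
    fix j k assume jk: "j \<le> k" "k < length \<rho>s"
    have "c.f2 (R ! j) \<le> c.f2 (R ! k)"
      using sorted_nth_mono[OF s2 jk(1)] jk len by simp
    then show "Re (mtrace (spectral dR E \<xi> * (ptrace_O dO dR (\<rho>s ! j) - (spectral dR (gibbs_weights dR \<beta> E) \<xi>))))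
            \<le> Re (mtrace (spectral dR E \<xi> * (ptrace_O dO dR (\<rho>s ! k) - (spectral dR (gibbs_weights dR \<beta> E) \<xi>))))"
      using jk by (simp add: nth B)
  next
    fix j assume j: "j < length \<rho>s"
    then show "passive_wrt dO \<phi> (ptrace_R dO dR (\<rho>s ! j))"
      using C iv len nth by simp
  qed
qed

end
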